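(* Consider $N$ users indexed by $\mathcal{U}=\{1,\dots,N\}$ with fixed channel power gains $h_1,\dots,h_N>0$, noise variance $\eta>0$, target throughputs $\theta_1,\dots,\theta_N>0$, and strategy sets $\mathcal{P}^i=[0,P_i^{max}]$ with $P_i^{max}>0$. For $\mathbf{P}\in\prod_i\mathcal{P}^i$ let $r_i(\mathbf{P})=\log_2\!\big(1+\frac{h_iP_i}{\eta+\sum_{j\neq i}h_jP_j}\big)$, and suppose the set $\mathcal{S}$ of profiles with $r_i(\mathbf{P})\ge\theta_i$ for all $i$ is non-empty. Let $\mathbf{P}^+$ be the efficient satisfaction equilibrium, i.e. the minimizer of $\sum_iP_i$ over $\mathcal{S}$. If for users $i,j$ we have $\theta_i\le\theta_j$, then $P_i^+h_i\le P_j^+h_j$. *)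

theory Defs
  imports Complex_Main
begin

text \<open>Users are indexed by {1..N}; a power profile is a function nat => real
  (only its values on {1..N} matter).\<close>

definition rate :: "nat \<Rightarrow> (nat \<Rightarrow> real) \<Rightarrow> real \<Rightarrow> (nat \<Rightarrow> real) \<Rightarrow> nat \<Rightarrow> real" where
  "rate N h \<eta> P i =
     log 2 (1 + h i * P i / (\<eta> + (\<Sum>j\<in>{1..N} - {i}. h j * P j)))"

definition feasible_profiles :: "nat \<Rightarrow> (nat \<Rightarrow> real) \<Rightarrow> real \<Rightarrow> (nat \<Rightarrow> real) \<Rightarrow> (nat \<Rightarrow> real) \<Rightarrow> (nat \<Rightarrow> real) set" where
  "feasible_profiles N h \<eta> \<theta> Pmax =
     {P. (\<forall>i\<in>{1..N}. 0 \<le> P i \<and> P i \<le> Pmax i) \<and>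
         (\<forall>i\<in>{1..N}. rate N h \<eta> P i \<ge> \<theta> i)}"

definition efficient_SE :: "nat \<Rightarrow> (nat \<Rightarrow> real) \<Rightarrow> real \<Rightarrow> (nat \<Rightarrow> real) \<Rightarrow> (nat \<Rightarrow> real) \<Rightarrow> (nat \<Rightarrow> real) \<Rightarrow> bool" where
  "efficient_SE N h \<eta> \<theta> Pmax P \<longleftrightarrow>
     P \<in> feasible_profiles N h \<eta> \<theta> Pmax \<and>
     (\<forall>Q\<in>feasible_profiles N h \<eta> \<theta> Pmax. (\<Sum>k\<in>{1..N}. P k) \<le> (\<Sum>k\<in>{1..N}. Q k))"

end

theory Submission
  imports Defs
begin

lemma log_mono_aux:
  fixes a a' d d' :: real
  assumes "0 \<le> a" "a \<le> a'" "0 < d'" "d' \<le> d"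
  shows "log 2 (1 + a / d) \<le> log 2 (1 + a' / d')"
proof -
  have "a / d \<le> a' / d'" using assms by (intro frac_le) auto
  moreover have "0 \<le> a / d" using assms by auto
  ultimately show ?thesis by (subst log_le_cancel_iff) auto
qed

lemma sum_minus_one:
  fixes f :: "nat \<Rightarrow> real"
  assumes "k \<in> {1..N}"
  shows "(\<Sum>j\<in>{1..N} - {k}. f j) = (\<Sum>j\<in>{1..N}. f j) - f k"
  using assms by (simp add: sum_diff1)

theorem proposition3:
  fixes N :: nat and h \<theta> Pmax Pp :: "nat \<Rightarrow> real" and \<eta> :: real and i j :: nat
  assumes h_pos: "\<forall>k\<in>{1..N}. h k > 0"
    and eta_pos: "\<eta> > 0"
    and theta_pos: "\<forall>k\<in>{1..N}. \<theta> k > 0"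
    and Pmax_pos: "\<forall>k\<in>{1..N}. Pmax k > 0"
    and S_nonempty: "feasible_profiles N h \<eta> \<theta> Pmax \<noteq> {}"
    and eff: "efficient_SE N h \<eta> \<theta> Pmax Pp"
    and i: "i \<in> {1..N}" and j: "j \<in> {1..N}"
    and le: "\<theta> i \<le> \<theta> j"
  shows "Pp i * h i \<le> Pp j * h j"
proof (rule ccontr)
  assume "\<not> ?thesis"
  hence gt: "Pp j * h j < Pp i * h i" by simp
  have feas: "Pp \<in> feasible_profiles N h \<eta> \<theta> Pmax" and
    opt: "\<And>Q. Q \<in> feasible_profiles N h \<eta> \<theta> Pmax \<Longrightarrow> (\<Sum>k\<in>{1..N}. Pp k) \<le> (\<Sum>k\<in>{1..N}. Q k)"
    using eff unfolding efficient_SE_def by auto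
  have bnd: "\<And>k. k \<in> {1..N} \<Longrightarrow> 0 \<le> Pp k \<and> Pp k \<le> Pmax k"
    and rt: "\<And>k. k \<in> {1..N} \<Longrightarrow> rate N h \<eta> Pp k \<ge> \<theta> k"
    using feas unfolding feasible_profiles_def by auto
  have hi: "h i > 0" and hj: "h j > 0" using h_pos i j by auto
  have nn: "\<And>k. k \<in> {1..N} \<Longrightarrow> 0 \<le> h k * Pp k"
    using bnd h_pos by (simp add: less_imp_le)
  have ij: "i \<noteq> j" using gt by auto
  define Q where "Q = Pp(i := Pp j * h j / h i)"
  have Qi: "Q i = Pp j * h j / h i" by (simp add: Q_def)
  have Qi0: "0 \<le> Q i" using bnd[OF j] hi hj Qi by simp
  have Qilt: "Q i < Pp i" using gt hi Qi by (simp add: divide_less_eq)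
  have Qle: "\<And>k. Q k \<le> Pp k" using Qilt by (simp add: Q_def)
  have Qother: "\<And>k. k \<noteq> i \<Longrightarrow> Q k = Pp k" by (simp add: Q_def)
  have sumle: "(\<Sum>k\<in>A. h k * Q k) \<le> (\<Sum>k\<in>A. h k * Pp k)" if "A \<subseteq> {1..N}" for A
    using that h_pos Qle by (intro sum_mono mult_left_mono) (auto intro: less_imp_le)
  have Dpos: "\<And>k. 0 < \<eta> + (\<Sum>j\<in>{1..N} - {k}. h j * Q j)"
  proof -
    fix k
    have "0 \<le> (\<Sum>j\<in>{1..N} - {k}. h j * Q j)"
      using h_pos bnd Qi0 by (intro sum_nonneg) (auto simp: Q_def less_imp_le)
    thus "0 < \<eta> + (\<Sum>j\<in>{1..N} - {k}. h j * Q j)" using eta_pos by simp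
  qed
  have QF: "Q \<in> feasible_profiles N h \<eta> \<theta> Pmax"
    unfolding feasible_profiles_def
  proof (intro CollectI conjI ballI)
    fix k assume k: "k \<in> {1..N}"
    show "0 \<le> Q k" using bnd[OF k] Qi0 by (cases "k = i") (auto simp: Q_def)
    show "Q k \<le> Pmax k" using bnd[OF k] Qle[of k] by linarith
    show "\<theta> k \<le> rate N h \<eta> Q k"
    proof (cases "k = i")
      case False
      have "rate N h \<eta> Pp k \<le> rate N h \<eta> Q k"
        unfolding rate_def using False Qother[OF False] nn[OF k] Dpos[of k] sumle[of "{1..N} - {k}"]
        by (intro log_mono_aux) auto
      thus ?thesis using rt[OF k] by linarith
    next
      case True
      have s1: "(\<Sum>j\<in>{1..N} - {i}. h j * Q j) = (\<Sum>j\<in>{1..N} - {i}. h j * Pp j)"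
        using Qother by (intro sum.cong) auto
      have "(\<Sum>k\<in>{1..N} - {i}. h k * Pp k) \<le> (\<Sum>k\<in>{1..N} - {j}. h k * Pp k)"
        using sum_minus_one[OF i, of "\<lambda>k. h k * Pp k"] sum_minus_one[OF j, of "\<lambda>k. h k * Pp k"] gt
        by (simp add: mult.commute)
      hence "rate N h \<eta> Pp j \<le> rate N h \<eta> Q i"
        unfolding rate_def using Qi hi nn[OF j] Dpos[of i] s1
        by (intro log_mono_aux) (auto simp: mult.commute)
      thus ?thesis using rt[OF j] le True by simp
    qed
  qed
  have "(\<Sum>k\<in>{1..N}. Q k) < (\<Sum>k\<in>{1..N}. Pp k)"
    using sum_minus_one[OF i, of Q] sum_minus_one[OF i, of Pp] Qilt
      sum.cong[of "{1..N} - {i}" "{1..N} - {i}" Q Pp] Qother by auto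
  with opt[OF QF] show False by linarith
qed

end
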